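(* Let $\epsilon_1,\epsilon_2,\dots$ be independent Rademacher random variables and $S_m=\epsilon_1+\dots+\epsilon_m$ (with $S_0=0$). For $n\ge1$ define the intervals $$A_n=[-1-\sqrt n,\,-\sqrt{n-1}),\qquad B_n=[-\sqrt{n-1},\,1-\sqrt n).$$ Let $k\ge 2$ be an integer. Then: (i) For $n=k^2-1$: $-k\in A_n=[-1-\sqrt{k^2-1},-\sqrt{k^2-2})$, and $$\mathbb{P}\{S_{n-1}\in A_n\}=\mathbb{P}\{S_{k^2-2}=k\}=\binom{k^2-2}{k(k-1)/2-1}2^{-(k^2-2)},\qquad \mathbb{P}\{S_{n-1}\in B_n\}=0.$$ (ii) For $n=k^2+2i$ with $i\in\{0,1,\dots,k-1\}$: $-1-k\in A_n=[-1-\sqrt{k^2+2i},-\sqrt{k^2+2i-1})$, and $$\mathbb{P}\{S_{n-1}\in A_n\}=\mathbb{P}\{S_{k^2+2i-1}=k+1\}=\binom{k^2+2i-1}{k(k-1)/2+i-1}2^{-(k^2+2i-1)},\qquad \mathbb{P}\{S_{n-1}\in B_n\}=0.$$ (iii) For $n=k^2+1+2i$ with $i\in\{0,1,\dots,k-1\}$: $-k\in B_n=[-\sqrt{k^2+2i},1-\sqrt{k^2+1+2i})$, and $$\mathbb{P}\{S_{n-1}\in B_n\}=\mathbb{P}\{S_{k^2+2i}=k\}=\binom{k^2+2i}{k(k-1)/2+i}2^{-(k^2+2i)},\qquad \mathbb{P}\{S_{n-1}\in A_n\}=0.$$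
   Context: A Rademacher random variable takes the values $1$ and $-1$ each with probability $1/2$. *)

theory Defs
  imports "HOL-Probability.Probability"
begin

definition A_int :: "nat \<Rightarrow> real set" where
  "A_int n = {-1 - sqrt (real n) ..< - sqrt (real n - 1)}"

definition B_int :: "nat \<Rightarrow> real set" where
  "B_int n = {- sqrt (real n - 1) ..< 1 - sqrt (real n)}"

definition psum :: "(nat \<Rightarrow> 'a \<Rightarrow> real) \<Rightarrow> nat \<Rightarrow> 'a \<Rightarrow> real" where
  "psum eps m \<omega> = (\<Sum>j\<in>{1..m}. eps j \<omega>)"

definition rademacher_seq :: "'a measure \<Rightarrow> (nat \<Rightarrow> 'a \<Rightarrow> real) \<Rightarrow> bool" where
  "rademacher_seq M eps \<longleftrightarrow>
     prob_space M \<and>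
     (\<forall>i\<ge>1. eps i \<in> borel_measurable M) \<and>
     (\<forall>i\<ge>1. measure M {\<omega>\<in>space M. eps i \<omega> = 1} = 1/2 \<and>
             measure M {\<omega>\<in>space M. eps i \<omega> = -1} = 1/2) \<and>
     prob_space.indep_vars M (\<lambda>_. borel) eps {1..}"

end

theory Submission
  imports Defs
begin


definition Rset :: "nat \<Rightarrow> real set" where
  "Rset m = {real (2*a) - real m | a. a \<le> m}"

lemma rs_ps: "rademacher_seq M eps \<Longrightarrow> prob_space M"
  by (simp add: rademacher_seq_def)

lemma psum_Suc: "psum eps (Suc m) \<omega> = psum eps m \<omega> + eps (Suc m) \<omega>"
  by (simp add: psum_def)

lemma psum_0: "psum eps 0 \<omega> = 0"
  by (simp add: psum_def)

lemma psum_meas: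
  assumes "rademacher_seq M eps" shows "psum eps m \<in> borel_measurable M"
proof -
  have "(\<lambda>\<omega>. \<Sum>j\<in>{1..m}. eps j \<omega>) \<in> borel_measurable M"
    using assms by (intro borel_measurable_sum) (auto simp: rademacher_seq_def)
  then show ?thesis by (simp add: psum_def[abs_def])
qed

lemma AE_pm:
  assumes R: "rademacher_seq M eps" and i: "i \<ge> 1"
  shows "AE \<omega> in M. eps i \<omega> = 1 \<or> eps i \<omega> = -1"
proof -
  interpret prob_space M using rs_ps[OF R] .
  have me: "eps i \<in> borel_measurable M" using R i by (simp add: rademacher_seq_def)
  have h: "prob {\<omega>\<in>space M. eps i \<omega> = 1} = 1/2" "prob {\<omega>\<in>space M. eps i \<omega> = -1} = 1/2"
    using R i by (auto simp: rademacher_seq_def)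
  have e1: "{\<omega>\<in>space M. eps i \<omega> = 1} \<in> events" using me by measurable
  have e2: "{\<omega>\<in>space M. eps i \<omega> = -1} \<in> events" using me by measurable
  have "prob ({\<omega>\<in>space M. eps i \<omega> = 1} \<union> {\<omega>\<in>space M. eps i \<omega> = -1}) = 1"
  proof -
    have d: "{\<omega>\<in>space M. eps i \<omega> = 1} \<inter> {\<omega>\<in>space M. eps i \<omega> = -1} = {}" by auto
    show ?thesis using finite_measure_Union[OF e1 e2 d] h by simp
  qed
  moreover have "{\<omega>\<in>space M. eps i \<omega> = 1} \<union> {\<omega>\<in>space M. eps i \<omega> = -1} = {\<omega>\<in>space M. eps i \<omega> = 1 \<or> eps i \<omega> = -1}"
    by auto
  ultimately have p1: "prob {\<omega>\<in>space M. eps i \<omega> = 1 \<or> eps i \<omega> = -1} = 1" by simp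
  have ev: "{\<omega>\<in>space M. eps i \<omega> = 1 \<or> eps i \<omega> = -1} \<in> events" using me by measurable
  then show ?thesis using p1 prob_Collect_eq_1[OF ev] by simp
qed

lemma Rset_Suc: "y \<in> Rset m \<Longrightarrow> e = 1 \<or> e = -1 \<Longrightarrow> y + e \<in> Rset (Suc m)"
proof -
  assume y: "y \<in> Rset m" and e: "e = 1 \<or> e = -1"
  then obtain a where a: "a \<le> m" "y = real (2*a) - real m" by (auto simp: Rset_def)
  show ?thesis using e
  proof
    assume "e = 1"
    then have "y + e = real (2*Suc a) - real (Suc m)" using a by simp
    then show ?thesis using a unfolding Rset_def by blast
  next
    assume "e = -1"
    then have "y + e = real (2*a) - real (Suc m)" using a by simp
    then show ?thesis using a unfolding Rset_def by (metis (mono_tags, lifting) le_SucI mem_Collect_eq)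
  qed
qed

lemma AE_R:
  assumes R: "rademacher_seq M eps"
  shows "AE \<omega> in M. psum eps m \<omega> \<in> Rset m"
proof (induction m)
  case 0
  have "Rset 0 = {0}" by (auto simp: Rset_def)
  then show ?case by (simp add: psum_0)
next
  case (Suc m)
  show ?case using Suc AE_pm[OF R, of "Suc m", simplified]
    by eventually_elim (auto simp: psum_Suc intro: Rset_Suc)
qed

lemma Rset_bound: "y \<in> Rset m \<Longrightarrow> - real m \<le> y \<and> y \<le> real m"
  by (auto simp: Rset_def)

lemma p_zero:
  assumes R: "rademacher_seq M eps" and x: "x \<notin> Rset m"
  shows "measure M {\<omega>\<in>space M. psum eps m \<omega> = x} = 0"
proof -
  interpret prob_space M using rs_ps[OF R] .
  have "AE \<omega> in M. \<not> psum eps m \<omega> = x" using AE_R[OF R, of m] by eventually_elim (use x in auto)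
  then show ?thesis by (rule prob_eq_0_AE)
qed

lemma p_rec:
  assumes R: "rademacher_seq M eps"
  shows "measure M {\<omega>\<in>space M. psum eps (Suc m) \<omega> = x} =
     measure M {\<omega>\<in>space M. psum eps m \<omega> = x - 1} / 2 + measure M {\<omega>\<in>space M. psum eps m \<omega> = x + 1} / 2"
proof -
  interpret prob_space M using rs_ps[OF R] .
  have me: "eps (Suc m) \<in> borel_measurable M" using R by (simp add: rademacher_seq_def)
  have ms: "psum eps m \<in> borel_measurable M" using psum_meas[OF R] .
  have ind0: "indep_vars (\<lambda>_. borel) eps (insert (Suc m) {1..m})"
    using R unfolding rademacher_seq_def by (auto intro: indep_vars_subset)
  have ind1: "indep_var borel (eps (Suc m)) borel (\<lambda>\<omega>. \<Sum>j\<in>{1..m}. eps j \<omega>)"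
    by (rule indep_vars_sum[OF _ _ ind0]) auto
  have ind: "indep_var borel (eps (Suc m)) borel (psum eps m)"
    using ind1 by (simp add: psum_def[abs_def])
  have h: "prob {\<omega>\<in>space M. eps (Suc m) \<omega> = 1} = 1/2" "prob {\<omega>\<in>space M. eps (Suc m) \<omega> = -1} = 1/2"
    using R by (auto simp: rademacher_seq_def)
  have "\<P>(\<omega> in M. psum eps (Suc m) \<omega> = x) =
        \<P>(\<omega> in M. (eps (Suc m) \<omega> = 1 \<and> psum eps m \<omega> = x - 1) \<or> (eps (Suc m) \<omega> = -1 \<and> psum eps m \<omega> = x + 1))"
    apply (rule prob_eq_AE)
    using AE_pm[OF R, of "Suc m", simplified] apply eventually_elim apply (auto simp: psum_Suc)
    using me ms by measurable
  also have "\<dots> = \<P>(\<omega> in M. eps (Suc m) \<omega> \<in> {1} \<and> psum eps m \<omega> \<in> {x - 1}) +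
                  \<P>(\<omega> in M. eps (Suc m) \<omega> \<in> {-1} \<and> psum eps m \<omega> \<in> {x + 1})"
  proof -
    have e1: "{\<omega>\<in>space M. eps (Suc m) \<omega> = 1 \<and> psum eps m \<omega> = x - 1} \<in> events" using me ms by measurable
    have e2: "{\<omega>\<in>space M. eps (Suc m) \<omega> = -1 \<and> psum eps m \<omega> = x + 1} \<in> events" using me ms by measurable
    have d: "{\<omega>\<in>space M. eps (Suc m) \<omega> = 1 \<and> psum eps m \<omega> = x - 1} \<inter> {\<omega>\<in>space M. eps (Suc m) \<omega> = -1 \<and> psum eps m \<omega> = x + 1} = {}" by auto
    have u: "{\<omega>\<in>space M. (eps (Suc m) \<omega> = 1 \<and> psum eps m \<omega> = x - 1) \<or> (eps (Suc m) \<omega> = -1 \<and> psum eps m \<omega> = x + 1)}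
      = {\<omega>\<in>space M. eps (Suc m) \<omega> = 1 \<and> psum eps m \<omega> = x - 1} \<union> {\<omega>\<in>space M. eps (Suc m) \<omega> = -1 \<and> psum eps m \<omega> = x + 1}" by auto
    show ?thesis unfolding u using finite_measure_Union[OF e1 e2 d] by simp
  qed
  also have "\<dots> = \<P>(\<omega> in M. eps (Suc m) \<omega> \<in> {1}) * \<P>(\<omega> in M. psum eps m \<omega> \<in> {x - 1}) +
                  \<P>(\<omega> in M. eps (Suc m) \<omega> \<in> {-1}) * \<P>(\<omega> in M. psum eps m \<omega> \<in> {x + 1})"
    using prob_indep_random_variable[OF ind, of "{1}" "{x-1}"] prob_indep_random_variable[OF ind, of "{-1}" "{x+1}"] by simp
  finally show ?thesis using h by simp
qed

lemma p_formula:
  assumes R: "rademacher_seq M eps"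
  shows "measure M {\<omega>\<in>space M. psum eps m \<omega> = real (2*a) - real m} = real (m choose a) / 2 ^ m"
proof (induction m arbitrary: a)
  case 0
  interpret prob_space M using rs_ps[OF R] .
  show ?case
  proof (cases a)
    case 0
    then show ?thesis by (simp add: psum_0 prob_space)
  next
    case (Suc b)
    have "real (2*a) - real 0 \<notin> Rset 0" using Rset_bound[of _ 0] Suc by force
    then show ?thesis using p_zero[OF R] Suc by simp
  qed
next
  case (Suc m)
  show ?case
  proof (cases a)
    case 0
    have n: "real (2*a) - real (Suc m) - 1 \<notin> Rset m" using Rset_bound[of _ m] 0 by force
    have e: "real (2*a) - real (Suc m) + 1 = real (2*0) - real m" using 0 by simp
    show ?thesis unfolding p_rec[OF R] p_zero[OF R n] e Suc.IH using 0 by simp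
  next
    case (Suc b)
    have e1: "real (2*a) - real (Suc m) - 1 = real (2*b) - real m" using Suc by simp
    have e2: "real (2*a) - real (Suc m) + 1 = real (2*Suc b) - real m" using Suc by simp
    show ?thesis unfolding p_rec[OF R] e1 e2 Suc.IH using Suc by (simp add: field_simps)
  qed
qed

lemma p_formula2:
  assumes R: "rademacher_seq M eps" and ab: "a + b = m"
  shows "measure M {\<omega>\<in>space M. psum eps m \<omega> = real a - real b} = real (m choose b) / 2 ^ m"
    and "measure M {\<omega>\<in>space M. psum eps m \<omega> = real b - real a} = real (m choose b) / 2 ^ m"
proof -
  have e: "real a - real b = real (2*a) - real m" using ab by simp
  have mb: "m - a = b" using ab by simp
  have c: "m choose a = m choose b" using binomial_symmetric[of a m] ab unfolding mb by simp
  show "measure M {\<omega>\<in>space M. psum eps m \<omega> = real a - real b} = real (m choose b) / 2 ^ m"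
    unfolding e p_formula[OF R, of m a] c ..
  have e2: "real b - real a = real (2*b) - real m" using ab by simp
  show "measure M {\<omega>\<in>space M. psum eps m \<omega> = real b - real a} = real (m choose b) / 2 ^ m"
    unfolding e2 p_formula[OF R, of m b] ..
qed

lemma Rset_int: "y \<in> Rset m \<Longrightarrow> \<exists>z::int. y = of_int z \<and> even (z + int m)"
proof -
  assume "y \<in> Rset m"
  then obtain a where a: "a \<le> m" "y = real (2*a) - real m" by (auto simp: Rset_def)
  show ?thesis
    by (rule exI[of _ "2 * int a - int m"]) (use a in simp)
qed

lemma int_in: "(of_int z::real) \<in> {lo..<hi} \<Longrightarrow> of_int L < lo \<Longrightarrow> hi \<le> of_int H \<Longrightarrow> L < z \<and> z < H"
proof -
  assume a: "(of_int z::real) \<in> {lo..<hi}" "of_int L < lo" "hi \<le> of_int H"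
  then have "(of_int L::real) < of_int z" "(of_int z::real) < of_int H" by auto
  then show ?thesis by simp
qed

lemma meas_gen:
  assumes R: "rademacher_seq M eps" and t: "t \<in> I" and I: "I \<in> sets borel"
    and u: "\<And>y. y \<in> I \<Longrightarrow> y \<in> Rset m \<Longrightarrow> y = t"
  shows "measure M {\<omega>\<in>space M. psum eps m \<omega> \<in> I} = measure M {\<omega>\<in>space M. psum eps m \<omega> = t}"
proof -
  interpret prob_space M using rs_ps[OF R] .
  have ms: "psum eps m \<in> borel_measurable M" using psum_meas[OF R] .
  have e1: "{\<omega>\<in>space M. psum eps m \<omega> \<in> I} \<in> events"
    using measurable_sets[OF ms I] by (simp add: vimage_def Int_def conj_commute)
  show ?thesis
    apply (rule prob_eq_AE)
    using AE_R[OF R, of m] apply eventually_elim using t u apply blast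
     apply (rule e1) using ms by measurable
qed

lemma meas_zero:
  assumes R: "rademacher_seq M eps"
    and u: "\<And>y. y \<in> I \<Longrightarrow> y \<in> Rset m \<Longrightarrow> False"
  shows "measure M {\<omega>\<in>space M. psum eps m \<omega> \<in> I} = 0"
proof -
  interpret prob_space M using rs_ps[OF R] .
  have "AE \<omega> in M. \<not> psum eps m \<omega> \<in> I" using AE_R[OF R, of m] by eventually_elim (use u in blast)
  then show ?thesis by (rule prob_eq_0_AE)
qed

lemma le_sqrt': "0 \<le> (a::real) \<Longrightarrow> a^2 \<le> b \<Longrightarrow> a \<le> sqrt b"
  by (rule real_le_rsqrt)
lemma sqrt_less': "0 \<le> (a::real) \<Longrightarrow> b < a^2 \<Longrightarrow> sqrt b < a"
  by (metis abs_of_nonneg real_sqrt_abs real_sqrt_less_iff)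
lemma sqrt_le': "0 \<le> (a::real) \<Longrightarrow> b \<le> a^2 \<Longrightarrow> sqrt b \<le> a"
  by (metis abs_of_nonneg real_sqrt_abs real_sqrt_le_iff)
lemma less_sqrt': "0 \<le> (a::real) \<Longrightarrow> a^2 < b \<Longrightarrow> a < sqrt b"
  by (metis abs_of_nonneg real_sqrt_abs real_sqrt_less_iff)



lemma case3:
  assumes R: "rademacher_seq M eps" and k: "k \<ge> 2" and i: "i < k"
  shows "let n = k^2 + 1 + 2*i; S = psum eps (n - 1) in
       - real k \<in> B_int n \<and>
       B_int n = {- sqrt (real (k^2 + 2*i)) ..< 1 - sqrt (real (k^2 + 1 + 2*i))} \<and>
       measure M {\<omega>\<in>space M. S \<omega> \<in> B_int n}
         = measure M {\<omega>\<in>space M. psum eps (k^2 + 2*i) \<omega> = real k} \<and>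
       measure M {\<omega>\<in>space M. psum eps (k^2 + 2*i) \<omega> = real k}
         = real ((k^2 + 2*i) choose (k * (k - 1) div 2 + i)) / 2 ^ (k^2 + 2*i) \<and>
       measure M {\<omega>\<in>space M. S \<omega> \<in> A_int n} = 0"
proof -
  define c where "c = k * (k - 1) div 2"
  define m where "m = k^2 + 2*i"
  have kk: "k * (k - 1) = k^2 - k" by (simp add: power2_eq_square diff_mult_distrib2)
  have "even (k * (k - 1))" by auto
  then have c2: "2 * c = k^2 - k" unfolding c_def kk by simp
  have kle: "k \<le> k^2" by (simp add: power2_eq_square)
  have mc: "m = 2*c + k + 2*i" unfolding m_def using c2 kle by linarith
  have n1: "k^2 + 1 + 2*i - 1 = m" unfolding m_def by simp
  have rk: "real (k^2) = (real k)^2" by simp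
  have ri: "real i + 1 \<le> real k" using i by linarith
  have s1: "real k \<le> sqrt (real (k^2 + 2*i))" by (rule le_sqrt') auto
  have s2: "sqrt (real (k^2 + 2*i)) < real k + 1"
    by (rule sqrt_less') (use ri in \<open>auto simp: power2_eq_square algebra_simps\<close>)
  have s3: "sqrt (real (k^2 + 1 + 2*i)) < real k + 1"
    by (rule sqrt_less') (use ri in \<open>auto simp: power2_eq_square algebra_simps\<close>)
  have s4: "real k \<le> sqrt (real (k^2 + 1 + 2*i))" by (rule le_sqrt') auto
  have Beq: "B_int (k^2 + 1 + 2*i) = {- sqrt (real (k^2 + 2*i)) ..< 1 - sqrt (real (k^2 + 1 + 2*i))}"
    unfolding B_int_def by simp
  have Aeq: "A_int (k^2 + 1 + 2*i) = {- 1 - sqrt (real (k^2 + 1 + 2*i)) ..< - sqrt (real (k^2 + 2*i))}"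
    unfolding A_int_def by simp
  have kin: "- real k \<in> B_int (k^2 + 1 + 2*i)" unfolding Beq using s1 s3 by auto
  have m1: "measure M {\<omega>\<in>space M. psum eps m \<omega> \<in> B_int (k^2 + 1 + 2*i)} = measure M {\<omega>\<in>space M. psum eps m \<omega> = - real k}"
  proof (rule meas_gen[OF R kin])
    show "B_int (k^2 + 1 + 2*i) \<in> sets borel" unfolding Beq by simp
    fix y assume y: "y \<in> B_int (k^2 + 1 + 2*i)" "y \<in> Rset m"
    obtain z where z: "y = of_int z" using Rset_int[OF y(2)] by blast
    have "- int k - 1 < z \<and> z < - int k + 1"
      by (rule int_in[of z]) (use y z Beq s2 s4 in auto)
    then have "z = - int k" by linarith
    then show "y = - real k" using z by simp
  qed
  have m0: "measure M {\<omega>\<in>space M. psum eps m \<omega> \<in> A_int (k^2 + 1 + 2*i)} = 0"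
  proof (rule meas_zero[OF R])
    fix y assume y: "y \<in> A_int (k^2 + 1 + 2*i)" "y \<in> Rset m"
    obtain z where z: "y = of_int z" "even (z + int m)" using Rset_int[OF y(2)] by blast
    have "- int k - 2 < z \<and> z < - int k"
      by (rule int_in[of z]) (use y z Aeq s1 s3 in auto)
    moreover have "int m = 2 * int c + int k + 2 * int i" using mc by simp
    ultimately show False using z(2) by presburger
  qed
  have ab: "(c + i + k) + (c + i) = m" using mc by simp
  have f1: "measure M {\<omega>\<in>space M. psum eps m \<omega> = real k} = real (m choose (c + i)) / 2 ^ m"
    using p_formula2(1)[OF R ab] by simp
  have f2: "measure M {\<omega>\<in>space M. psum eps m \<omega> = - real k} = real (m choose (c + i)) / 2 ^ m"
    using p_formula2(2)[OF R ab] by simp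
  show ?thesis unfolding Let_def n1 using kin Beq m1 m0 f1 f2 by (simp add: m_def c_def)
qed

lemma case2:
  assumes R: "rademacher_seq M eps" and k: "k \<ge> 2" and i: "i < k"
  shows "let n = k^2 + 2*i; S = psum eps (n - 1) in
       - 1 - real k \<in> A_int n \<and>
       A_int n = {-1 - sqrt (real (k^2 + 2*i)) ..< - sqrt (real (k^2 + 2*i) - 1)} \<and>
       measure M {\<omega>\<in>space M. S \<omega> \<in> A_int n}
         = measure M {\<omega>\<in>space M. psum eps (k^2 + 2*i - 1) \<omega> = real k + 1} \<and>
       measure M {\<omega>\<in>space M. psum eps (k^2 + 2*i - 1) \<omega> = real k + 1}
         = real ((k^2 + 2*i - 1) choose (k * (k - 1) div 2 + i - 1)) / 2 ^ (k^2 + 2*i - 1) \<and>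
       measure M {\<omega>\<in>space M. S \<omega> \<in> B_int n} = 0"
proof -
  define c where "c = k * (k - 1) div 2"
  define m where "m = k^2 + 2*i - 1"
  define n where "n = k^2 + 2*i"
  have kk: "k * (k - 1) = k^2 - k" by (simp add: power2_eq_square diff_mult_distrib2)
  have "even (k * (k - 1))" by auto
  then have c2: "2 * c = k^2 - k" unfolding c_def kk by simp
  have kle: "k \<le> k^2" by (simp add: power2_eq_square)
  have k4: "4 \<le> k^2" using k by (metis power2_nat_le_eq_le numeral_Bit0 power2_eq_square  mult_2)
  have k2k: "2 * k \<le> k^2" using k by (simp add: power2_eq_square)
  have c1: "1 \<le> c" using c2 k2k k by linarith
  have mc: "m = 2*c + k + 2*i - 1" unfolding m_def using c2 kle by linarith
  have imc: "int m = 2 * int c + int k + 2 * int i - 1" using mc c1 by linarith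
  have rn: "real n = (real k)^2 + 2 * real i" unfolding n_def by simp
  have ri: "real i + 1 \<le> real k" using i by linarith
  have rk: "2 \<le> real k" using k by simp
  have t1: "sqrt (real n) < real k + 1"
    by (rule sqrt_less') (use ri rn in \<open>auto simp: power2_eq_square algebra_simps\<close>)
  have t2: "real k \<le> sqrt (real n)" by (rule le_sqrt') (use rn in auto)
  have t3: "sqrt (real n - 1) < real k + 1"
    by (rule sqrt_less') (use ri rn in \<open>auto simp: power2_eq_square algebra_simps\<close>)
  have t4: "real k - 1 \<le> sqrt (real n - 1)"
    by (rule le_sqrt') (use ri rn rk in \<open>auto simp: power2_eq_square algebra_simps\<close>)
  have Aeq: "A_int n = {-1 - sqrt (real n) ..< - sqrt (real n - 1)}"
    unfolding A_int_def by simp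
  have Beq: "B_int n = {- sqrt (real n - 1) ..< 1 - sqrt (real n)}"
    unfolding B_int_def by simp
  have kin: "- 1 - real k \<in> A_int n" unfolding Aeq using t2 t3 by auto
  have m1: "measure M {\<omega>\<in>space M. psum eps m \<omega> \<in> A_int n} = measure M {\<omega>\<in>space M. psum eps m \<omega> = - 1 - real k}"
  proof (rule meas_gen[OF R kin])
    show "A_int n \<in> sets borel" unfolding Aeq by simp
    fix y assume y: "y \<in> A_int n" "y \<in> Rset m"
    obtain z where z: "y = of_int z" "even (z + int m)" using Rset_int[OF y(2)] by blast
    have "- int k - 2 < z \<and> z < - int k + 1"
      by (rule int_in[of z]) (use y z Aeq t1 t4 in auto)
    then have "z = - int k - 1" using z(2) imc by presburger
    then show "y = - 1 - real k" using z by simp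
  qed
  have m0: "measure M {\<omega>\<in>space M. psum eps m \<omega> \<in> B_int n} = 0"
  proof (rule meas_zero[OF R])
    fix y assume y: "y \<in> B_int n" "y \<in> Rset m"
    obtain z where z: "y = of_int z" "even (z + int m)" using Rset_int[OF y(2)] by blast
    have "- int k - 1 < z \<and> z < - int k + 1"
      by (rule int_in[of z]) (use y z Beq t2 t3 in auto)
    then show False using z(2) imc by presburger
  qed
  define b where "b = c + i - 1"
  have ab: "(b + k + 1) + b = m" using mc c1 unfolding b_def by simp
  have f1: "measure M {\<omega>\<in>space M. psum eps m \<omega> = real k + 1} = real (m choose b) / 2 ^ m"
    using p_formula2(1)[OF R ab] by (simp add: algebra_simps)
  have f2: "measure M {\<omega>\<in>space M. psum eps m \<omega> = - 1 - real k} = real (m choose b) / 2 ^ m"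
    using p_formula2(2)[OF R ab] by (simp add: algebra_simps)
  have nm: "n - 1 = m" unfolding n_def m_def ..
  have rm: "real (k^2 + 2*i) - 1 = real n - 1" unfolding n_def ..
  show ?thesis unfolding Let_def n_def[symmetric] nm m_def[symmetric] b_def[symmetric] c_def[symmetric] rm
  proof (intro conjI)
    show "measure M {\<omega>\<in>space M. psum eps m \<omega> \<in> A_int n} = measure M {\<omega>\<in>space M. psum eps m \<omega> = real k + 1}"
      using m1 f1 f2 by simp
  qed fact+
qed

lemma case1:
  assumes R: "rademacher_seq M eps" and k: "k \<ge> 2"
  shows "let n = k^2 - 1; S = psum eps (n - 1) in
       - real k \<in> A_int n \<and>
       A_int n = {-1 - sqrt (real (k^2 - 1)) ..< - sqrt (real (k^2 - 2))} \<and>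
       measure M {\<omega>\<in>space M. S \<omega> \<in> A_int n} = measure M {\<omega>\<in>space M. psum eps (k^2 - 2) \<omega> = real k} \<and>
       measure M {\<omega>\<in>space M. psum eps (k^2 - 2) \<omega> = real k}
         = real ((k^2 - 2) choose (k * (k - 1) div 2 - 1)) / 2 ^ (k^2 - 2) \<and>
       measure M {\<omega>\<in>space M. S \<omega> \<in> B_int n} = 0"
proof -
  define c where "c = k * (k - 1) div 2"
  define m where "m = k^2 - 2"
  define n where "n = k^2 - 1"
  have kk: "k * (k - 1) = k^2 - k" by (simp add: power2_eq_square diff_mult_distrib2)
  have "even (k * (k - 1))" by auto
  then have c2: "2 * c = k^2 - k" unfolding c_def kk by simp
  have kle: "k \<le> k^2" by (simp add: power2_eq_square)
  have k4: "4 \<le> k^2" using k by (metis power2_nat_le_eq_le numeral_Bit0 power2_eq_square  mult_2)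
  have k2k: "2 * k \<le> k^2" using k by (simp add: power2_eq_square)
  have c1: "1 \<le> c" using c2 k2k k by linarith
  have mc: "m = 2*c + k - 2" unfolding m_def using c2 kle by linarith
  have imc: "int m = 2 * int c + int k - 2" using mc c1 by linarith
  have rn: "real n = (real k)^2 - 1" unfolding n_def using k4 by (simp add: of_nat_diff)
  have rm: "real m = (real k)^2 - 2" unfolding m_def using k4 by (simp add: of_nat_diff)
  have rn1: "real n - 1 = real m" using rn rm by simp
  have rk: "2 \<le> real k" using k by simp
  have u1: "real k - 1 \<le> sqrt (real n)"
    by (rule le_sqrt') (use rn rk in \<open>auto simp: power2_eq_square algebra_simps\<close>)
  have u2: "sqrt (real n) < real k"
    by (rule sqrt_less') (use rn rk in \<open>auto simp: power2_eq_square algebra_simps\<close>)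
  have u3: "sqrt (real m) < real k"
    by (rule sqrt_less') (use rm rk in \<open>auto simp: power2_eq_square algebra_simps\<close>)
  have u4: "real k - 1 \<le> sqrt (real m)"
    by (rule le_sqrt') (use rm rk in \<open>auto simp: power2_eq_square algebra_simps\<close>)
  have Aeq: "A_int n = {-1 - sqrt (real n) ..< - sqrt (real m)}"
    unfolding A_int_def rn1 ..
  have Beq: "B_int n = {- sqrt (real m) ..< 1 - sqrt (real n)}"
    unfolding B_int_def rn1 ..
  have kin: "- real k \<in> A_int n" unfolding Aeq using u1 u3 by auto
  have m1: "measure M {\<omega>\<in>space M. psum eps m \<omega> \<in> A_int n} = measure M {\<omega>\<in>space M. psum eps m \<omega> = - real k}"
  proof (rule meas_gen[OF R kin])
    show "A_int n \<in> sets borel" unfolding Aeq by simp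
    fix y assume y: "y \<in> A_int n" "y \<in> Rset m"
    obtain z where z: "y = of_int z" "even (z + int m)" using Rset_int[OF y(2)] by blast
    have "- int k - 1 < z \<and> z < - int k + 1"
      by (rule int_in[of z]) (use y z Aeq u2 u4 in auto)
    then have "z = - int k" by linarith
    then show "y = - real k" using z by simp
  qed
  have m0: "measure M {\<omega>\<in>space M. psum eps m \<omega> \<in> B_int n} = 0"
  proof (rule meas_zero[OF R])
    fix y assume y: "y \<in> B_int n" "y \<in> Rset m"
    obtain z where z: "y = of_int z" "even (z + int m)" using Rset_int[OF y(2)] by blast
    have "- int k < z \<and> z < - int k + 2"
      by (rule int_in[of z]) (use y z Beq u1 u3 in auto)
    then show False using z(2) imc by presburger
  qed
  define b where "b = c - 1"
  have ab: "(b + k) + b = m" using mc c1 unfolding b_def by simp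
  have f1: "measure M {\<omega>\<in>space M. psum eps m \<omega> = real k} = real (m choose b) / 2 ^ m"
    using p_formula2(1)[OF R ab] by (simp add: algebra_simps)
  have f2: "measure M {\<omega>\<in>space M. psum eps m \<omega> = - real k} = real (m choose b) / 2 ^ m"
    using p_formula2(2)[OF R ab] by (simp add: algebra_simps)
  have nm: "n - 1 = m" unfolding n_def m_def by simp
  show ?thesis unfolding Let_def n_def[symmetric] m_def[symmetric] nm b_def[symmetric] c_def[symmetric]
  proof (intro conjI)
    show "measure M {\<omega>\<in>space M. psum eps m \<omega> \<in> A_int n} = measure M {\<omega>\<in>space M. psum eps m \<omega> = real k}"
      using m1 f1 f2 by simp
  qed fact+
qed



theorem lemma2p1:
  fixes M :: "'a measure" and eps :: "nat \<Rightarrow> 'a \<Rightarrow> real" and k :: nat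
  assumes "rademacher_seq M eps" and "k \<ge> 2"
  shows
    "(let n = k^2 - 1; S = psum eps (n - 1) in
       - real k \<in> A_int n \<and>
       A_int n = {-1 - sqrt (real (k^2 - 1)) ..< - sqrt (real (k^2 - 2))} \<and>
       measure M {\<omega>\<in>space M. S \<omega> \<in> A_int n} = measure M {\<omega>\<in>space M. psum eps (k^2 - 2) \<omega> = real k} \<and>
       measure M {\<omega>\<in>space M. psum eps (k^2 - 2) \<omega> = real k}
         = real ((k^2 - 2) choose (k * (k - 1) div 2 - 1)) / 2 ^ (k^2 - 2) \<and>
       measure M {\<omega>\<in>space M. S \<omega> \<in> B_int n} = 0)
   \<and> (\<forall>i<k. let n = k^2 + 2*i; S = psum eps (n - 1) in
       - 1 - real k \<in> A_int n \<and>
       A_int n = {-1 - sqrt (real (k^2 + 2*i)) ..< - sqrt (real (k^2 + 2*i) - 1)} \<and>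
       measure M {\<omega>\<in>space M. S \<omega> \<in> A_int n}
         = measure M {\<omega>\<in>space M. psum eps (k^2 + 2*i - 1) \<omega> = real k + 1} \<and>
       measure M {\<omega>\<in>space M. psum eps (k^2 + 2*i - 1) \<omega> = real k + 1}
         = real ((k^2 + 2*i - 1) choose (k * (k - 1) div 2 + i - 1)) / 2 ^ (k^2 + 2*i - 1) \<and>
       measure M {\<omega>\<in>space M. S \<omega> \<in> B_int n} = 0)
   \<and> (\<forall>i<k. let n = k^2 + 1 + 2*i; S = psum eps (n - 1) in
       - real k \<in> B_int n \<and>
       B_int n = {- sqrt (real (k^2 + 2*i)) ..< 1 - sqrt (real (k^2 + 1 + 2*i))} \<and>
       measure M {\<omega>\<in>space M. S \<omega> \<in> B_int n}
         = measure M {\<omega>\<in>space M. psum eps (k^2 + 2*i) \<omega> = real k} \<and>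
       measure M {\<omega>\<in>space M. psum eps (k^2 + 2*i) \<omega> = real k}
         = real ((k^2 + 2*i) choose (k * (k - 1) div 2 + i)) / 2 ^ (k^2 + 2*i) \<and>
       measure M {\<omega>\<in>space M. S \<omega> \<in> A_int n} = 0)"
  by (intro conjI allI impI case1[OF assms] case2[OF assms] case3[OF assms])

end
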